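(* Let $n\ge 2$. Let $\hat a_{i,i-1}>0$ and $\hat b_{i,i-1}\in\mathbb{R}$ for $2\le i\le n$; for $1\le m\le k\le n$ put $\hat a_{k,m}:=\prod_{i=m+1}^{k}\hat a_{i,i-1}$ (so $\hat a_{k,k}=1$), and put $\hat b_{n,1}:=\sum_{k=2}^{n}\hat a_{n,k}\hat b_{k,k-1}$. Let $L_i\in\mathbb{R}$ ($2\le i\le n$) and $R_i\in\mathbb{R}$ ($1\le i\le n-1$) satisfy $L_i=\hat a_{i,i-1}R_{i-1}+\hat b_{i,i-1}$ for $2\le i\le n$ and $L_i\le R_i$ for $2\le i\le n-1$. Define $i^*$: if $\min_{2\le k\le n}\hat a_{k,1}\le1$, let $i^*\in\{2,\ldots,n\}$ be an index attaining $\min_{2\le k\le n}\hat a_{k,1}$; otherwise $i^*=1$. Suppose $i^*\ge 2$. Then $$\sum_{j=2}^{n}\bigl(L_j-R_{j-1}\bigr)\le(\hat a_{i^*,1}-1)R_1+\frac{\hat a_{n,i^*}-1}{\hat a_{n,i^*}}\,L_n+\frac{\hat b_{n,1}}{\hat a_{n,i^*}}.$$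
   Context: Setting: a timing packet traverses a chain of nodes $1,\ldots,n$; $L_i=\tau^{i,l}(t_{i,l})$ is the receive time-stamp and $R_i=\tau^{i,r}(t_{i,r})$ the send time-stamp of node $i$, produced by arbitrary "left"/"right" clocks. $\hat a_{i,i-1},\hat b_{i,i-1}$ are declared relative skews/offsets of adjacent nodes, $\hat a_{k,m}$ the skew product, and $\hat b_{n,1}$ the offset of the composition of the declared affine relations along the chain. The equation $L_i=\hat a_{i,i-1}R_{i-1}+\hat b_{i,i-1}$ is the skew-consistency condition and $L_i\le R_i$ is causality. *)

theory Defs
  imports Main "HOL-Analysis.Analysis"
begin

text \<open>a i stands for the declared relative skew of node i w.r.t. node i-1 (2 \<le> i \<le> n).
  skew_prod a k m = product over i = m+1..k of a i (empty product 1 when k = m).\<close>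
definition skew_prod :: "(nat \<Rightarrow> real) \<Rightarrow> nat \<Rightarrow> nat \<Rightarrow> real" where
  "skew_prod a k m = (\<Prod>i\<in>{m+1..k}. a i)"

text \<open>Offset of the composed affine relation along the chain 1..n.\<close>
definition chain_offset :: "(nat \<Rightarrow> real) \<Rightarrow> (nat \<Rightarrow> real) \<Rightarrow> nat \<Rightarrow> real" where
  "chain_offset a b n = (\<Sum>k=2..n. skew_prod a n k * b k)"

end

theory Submission
  imports Defs
begin

lemma sp_split:
  assumes "1 \<le> k" "k \<le> n"
  shows "skew_prod a n 1 = skew_prod a k 1 * skew_prod a n k"
proof -
  have "{2..n} = {2..k} \<union> {k+1..n}" using assms by auto
  moreover have "{2..k} \<inter> {k+1..n} = {}" by auto
  ultimately show ?thesis unfolding skew_prod_def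
    by (simp add: prod.union_disjoint[symmetric] numeral_2_eq_2)
qed

lemma sp_pos:
  assumes "\<And>i. 2 \<le> i \<Longrightarrow> i \<le> n \<Longrightarrow> a i > 0" "k \<le> n" "1 \<le> m"
  shows "skew_prod a k m > 0"
  unfolding skew_prod_def using assms by (intro prod_pos) auto

lemma sp_Suc:
  assumes "1 \<le> m"
  shows "skew_prod a (Suc m) 1 = skew_prod a m 1 * a (Suc m)"
  unfolding skew_prod_def using assms by (simp add: numeral_2_eq_2)

lemma telescope:
  fixes L R :: "nat \<Rightarrow> real"
  shows "(\<Sum>j=2..k+2. L j - R (j - 1)) = L (k+2) - R 1 - (\<Sum>j=2..k+1. R j - L j)"
proof (induction k)
  case 0
  then show ?case by (simp add: numeral_2_eq_2)
next
  case (Suc k)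
  have "(\<Sum>j=2..Suc k+2. L j - R (j - 1)) = (\<Sum>j=2..k+2. L j - R (j - 1)) + (L (k+3) - R (k+2))"
    by (simp add: numeral_3_eq_3)
  also have "\<dots> = L (k+3) - R 1 - (\<Sum>j=2..Suc k+1. R j - L j)"
    using Suc by simp
  finally show ?case by (simp add: numeral_3_eq_3)
qed

lemma unfoldL:
  fixes a b L R :: "nat \<Rightarrow> real"
  assumes apos: "\<And>i. 2 \<le> i \<Longrightarrow> i \<le> n \<Longrightarrow> a i > 0"
    and skew: "\<And>i. 2 \<le> i \<Longrightarrow> i \<le> n \<Longrightarrow> L i = a i * R (i - 1) + b i"
  shows "k+2 \<le> n \<Longrightarrow> L (k+2) / skew_prod a (k+2) 1 = R 1 + (\<Sum>j=2..k+2. b j / skew_prod a j 1)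
          + (\<Sum>j=2..k+1. (R j - L j) / skew_prod a j 1)"
proof (induction k)
  case 0
  have "skew_prod a 2 1 = a 2" unfolding skew_prod_def by (simp add: numeral_2_eq_2)
  moreover have "a 2 > 0" using apos 0 by simp
  moreover have "L 2 = a 2 * R 1 + b 2" using skew[of 2] 0 by simp
  ultimately show ?case by (simp add: field_simps numeral_2_eq_2)
next
  case (Suc k)
  let ?A = "\<lambda>j. skew_prod a j 1"
  have Ak: "?A (k+2) > 0" using sp_pos[OF apos, of "k+2"] Suc by simp
  have ak: "a (k+3) > 0" using apos Suc by simp
  have As: "?A (k+3) = ?A (k+2) * a (k+3)" using sp_Suc[of "k+2" a] by (simp add: numeral_3_eq_3)
  have Ls: "L (k+3) = a (k+3) * R (k+2) + b (k+3)" using skew[of "k+3"] Suc by simp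
  have IH: "L (k+2) / ?A (k+2) = R 1 + (\<Sum>j=2..k+2. b j / ?A j) + (\<Sum>j=2..k+1. (R j - L j) / ?A j)"
    using Suc by simp
  have "L (k+3) / ?A (k+3) = R (k+2) / ?A (k+2) + b (k+3) / ?A (k+3)"
    using Ak ak As Ls by (simp add: field_simps)
  also have "R (k+2) / ?A (k+2) = L (k+2) / ?A (k+2) + (R (k+2) - L (k+2)) / ?A (k+2)"
    using Ak by (simp add: field_simps)
  finally have "L (k+3) / ?A (k+3) = R 1 + ((\<Sum>j=2..k+2. b j / ?A j) + b (k+3) / ?A (k+3))
     + ((\<Sum>j=2..k+1. (R j - L j) / ?A j) + (R (k+2) - L (k+2)) / ?A (k+2))"
    using IH by simp
  then show ?case by (simp add: numeral_3_eq_3)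
qed

theorem lemma4:
  fixes n :: nat and a b L R :: "nat \<Rightarrow> real" and istar :: nat
  assumes n2: "n \<ge> 2"
    and apos: "\<And>i. 2 \<le> i \<Longrightarrow> i \<le> n \<Longrightarrow> a i > 0"
    and skew: "\<And>i. 2 \<le> i \<Longrightarrow> i \<le> n \<Longrightarrow> L i = a i * R (i - 1) + b i"
    and causal: "\<And>i. 2 \<le> i \<Longrightarrow> i \<le> n - 1 \<Longrightarrow> L i \<le> R i"
    and minle1: "(MIN k\<in>{2..n}. skew_prod a k 1) \<le> 1"
    and istar_range: "istar \<in> {2..n}"
    and istar_min: "skew_prod a istar 1 = (MIN k\<in>{2..n}. skew_prod a k 1)"
  shows "(\<Sum>j=2..n. L j - R (j - 1))
     \<le> (skew_prod a istar 1 - 1) * R 1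
        + (skew_prod a n istar - 1) / skew_prod a n istar * L n
        + chain_offset a b n / skew_prod a n istar"
proof -
  let ?A = "\<lambda>j. skew_prod a j 1"
  obtain k where nk: "n = k + 2" using n2 by (metis add.commute le_Suc_ex)
  define p where "p = istar"
  have p: "2 \<le> p" "p \<le> n" using istar_range p_def by auto
  have An: "?A n > 0" using sp_pos[OF apos] by simp
  have Ap: "?A p > 0" using sp_pos[OF apos] p by simp
  have Apos: "\<And>j. j \<le> n \<Longrightarrow> ?A j > 0" using sp_pos[OF apos] by simp
  have c0: "?A n = ?A p * skew_prod a n p" using sp_split[of p n a] p by simp
  have c: "skew_prod a n p = ?A n / ?A p" using c0 Ap by (simp add: field_simps)
  have cpos: "skew_prod a n p > 0" using c An Ap by simp
  have nkA: "\<And>j. 1 \<le> j \<Longrightarrow> j \<le> n \<Longrightarrow> skew_prod a n j = ?A n / ?A j"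
  proof -
    fix j assume j: "1 \<le> j" "j \<le> n"
    have "?A n = ?A j * skew_prod a n j" using sp_split[OF j] .
    moreover have "?A j > 0" using Apos j by simp
    ultimately show "skew_prod a n j = ?A n / ?A j" by (simp add: field_simps)
  qed
  define Sb where "Sb = (\<Sum>j=2..n. b j / ?A j)"
  define Sd where "Sd = (\<Sum>j=2..k+1. (R j - L j) / ?A j)"
  define D where "D = (\<Sum>j=2..k+1. R j - L j)"
  have B: "chain_offset a b n = ?A n * Sb"
    unfolding chain_offset_def Sb_def sum_distrib_left
  proof (rule sum.cong)
    fix j assume j: "j \<in> {2..n}"
    hence "skew_prod a n j = ?A n / ?A j" by (intro nkA) auto
    moreover have "?A j > 0" using Apos j by simp
    ultimately show "skew_prod a n j * b j = ?A n * (b j / ?A j)" by simp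
  qed simp
  have LnA: "L n / ?A n = R 1 + Sb + Sd"
    using unfoldL[of n a L R b k, OF apos skew] nk Sb_def Sd_def by simp
  have Ln: "L n = ?A n * (R 1 + Sb + Sd)" using LnA An by (simp add: field_simps)
  have lhs: "(\<Sum>j=2..n. L j - R (j - 1)) = L n - R 1 - D"
    using telescope[of L R k] nk D_def by simp
  have pmin: "\<And>j. j \<in> {2..n} \<Longrightarrow> ?A p \<le> ?A j"
    using istar_min p_def by (metis Min_le finite_atLeastAtMost finite_imageI imageI)
  have key: "?A p * Sd \<le> D"
    unfolding Sd_def D_def sum_distrib_left
  proof (rule sum_mono)
    fix j assume j: "j \<in> {2..k+1}"
    have d: "R j - L j \<ge> 0" using causal[of j] j nk by auto
    have Aj: "?A j > 0" using Apos j nk by auto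
    have "?A p \<le> ?A j" using pmin j nk by auto
    hence "?A p / ?A j \<le> 1" using Aj by simp
    hence "?A p / ?A j * (R j - L j) \<le> 1 * (R j - L j)" using d by (intro mult_right_mono)
    thus "?A p * ((R j - L j) / ?A j) \<le> R j - L j" by simp
  qed
  have rhs: "(?A p - 1) * R 1 + (skew_prod a n p - 1) / skew_prod a n p * L n
        + chain_offset a b n / skew_prod a n p = L n - R 1 - ?A p * Sd"
    unfolding c B using An Ap Ln by (simp add: field_simps)
  show ?thesis using lhs rhs key p_def by simp
qed

end
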